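(* For any discrete group $G$, $HC^\pm_\bullet(kG;1,\varepsilon)\cong HC^\pm_\bullet(G,k)$.
   Context: $k$ is a field of characteristic $0$; $kG$ is the group Hopf algebra ($\Delta(g)=g\otimes g$, $\varepsilon(g)=1$, $S(g)=g^{-1}$). $HC^\pm_\bullet(kG;1,\varepsilon)$ is the dihedral homology of the dihedral module $\mathrm{CC}_n(kG;1,\varepsilon)=(kG)^{\otimes n}$ with faces $\partial_0(g_1\otimes\cdots\otimes g_n)=g_2\otimes\cdots\otimes g_n$, $\partial_i=g_1\otimes\cdots\otimes g_ig_{i+1}\otimes\cdots\otimes g_n$ ($1\le i\le n-1$), $\partial_n=g_1\otimes\cdots\otimes g_{n-1}$, degeneracies inserting $1$, $\tau_n(g_1\otimes\cdots\otimes g_n)=(g_1\cdots g_n)^{-1}\otimes g_1\otimes\cdots\otimes g_{n-1}$, $\omega_n(g_1\otimes\cdots\otimes g_n)=g_n^{-1}\otimes\cdots\otimes g_1^{-1}$. The dihedral group homology $HC^\pm_\bullet(G,k)$ is the dihedral homology of the dihedral submodule of the standard dihedral module of the $*$-algebra $kG$ (with $g^*=g^{-1}$; $\mathcal{A}^{\otimes n+1}$ with faces multiplying adjacent factors and cyclically the last with the first, $\tau_n(a_0\otimes\cdots\otimes a_n)=a_n\otimes a_0\otimes\cdots\otimes a_{n-1}$, $\omega_n(a_0\otimes\cdots\otimes a_n)=a_0^*\otimes a_n^*\otimes\cdots\otimes a_1^*$) spanned by the tensors $g_0\otimes\cdots\otimes g_n$ with $g_i\in G$ and $g_0g_1\cdots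 g_n=1$. Dihedral homology means homology of the $\pm1$-eigenspaces of the involution on the cyclic complex. *)

theory Defs
  imports "HOL-Algebra.Group"
begin

text \<open>A chain in degree n is a finitely supported k-valued function on the
basis set of degree n (basis elements are lists of group elements).\<close>

definition chains :: "'a set \<Rightarrow> ('a \<Rightarrow> 'k::zero) set" where
  "chains B = {c. finite {x. c x \<noteq> 0} \<and> {x. c x \<noteq> 0} \<subseteq> B}"

definition lin :: "('a \<Rightarrow> 'b) \<Rightarrow> ('a \<Rightarrow> 'k::comm_ring_1) \<Rightarrow> 'b \<Rightarrow> 'k" where
  "lin f c y = (\<Sum>x | c x \<noteq> 0 \<and> f x = y. c x)"

text \<open>face n i : degree n -> degree n-1 (i = 0..n), tau n, omega n : degree n -> degree n.\<close>

definition bdry :: "(nat \<Rightarrow> nat \<Rightarrow> 'a \<Rightarrow> 'a) \<Rightarrow> nat \<Rightarrow> ('a \<Rightarrow> 'k::comm_ring_1) \<Rightarrow> 'a \<Rightarrow> 'k" where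
  "bdry face n c = (\<lambda>y. \<Sum>i\<le>n. (-1)^i * lin (face n i) c y)"

definition cyct :: "(nat \<Rightarrow> 'a \<Rightarrow> 'a) \<Rightarrow> nat \<Rightarrow> ('a \<Rightarrow> 'k::comm_ring_1) \<Rightarrow> 'a \<Rightarrow> 'k" where
  "cyct tau n c = (\<lambda>y. (-1)^n * lin (tau n) c y)"

text \<open>Involution on the cyclic (Connes) complex: (-1)^(n(n+1)/2) omega_n (Loday's convention).\<close>
definition invl :: "(nat \<Rightarrow> 'a \<Rightarrow> 'a) \<Rightarrow> nat \<Rightarrow> ('a \<Rightarrow> 'k::comm_ring_1) \<Rightarrow> 'a \<Rightarrow> 'k" where
  "invl omega n c = (\<lambda>y. (-1)^(n * (n + 1) div 2) * lin (omega n) c y)"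

text \<open>Image of (1 - t_n): the subspace one quotients by to get Connes' complex C^lambda.\<close>
definition imt :: "(nat \<Rightarrow> 'a set) \<Rightarrow> (nat \<Rightarrow> 'a \<Rightarrow> 'a) \<Rightarrow> nat \<Rightarrow> ('a \<Rightarrow> 'k::comm_ring_1) set" where
  "imt Bas tau n = {(\<lambda>y. c y - cyct tau n c y) | c. c \<in> chains (Bas n)}"

text \<open>Lifts to C_n of the s-eigenspace (s = 1 or -1) of the involution on C^lambda_n.\<close>
definition dchains :: "(nat \<Rightarrow> 'a set) \<Rightarrow> (nat \<Rightarrow> 'a \<Rightarrow> 'a) \<Rightarrow> (nat \<Rightarrow> 'a \<Rightarrow> 'a)
    \<Rightarrow> 'k::comm_ring_1 \<Rightarrow> nat \<Rightarrow> ('a \<Rightarrow> 'k) set" where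
  "dchains Bas tau omega s n =
     {x \<in> chains (Bas n). (\<lambda>y. x y - s * invl omega n x y) \<in> imt Bas tau n}"

text \<open>Lifts of cycles and of boundaries; dihedral homology in degree n is dcycles / dbound.\<close>
definition dcycles :: "(nat \<Rightarrow> 'a set) \<Rightarrow> (nat \<Rightarrow> nat \<Rightarrow> 'a \<Rightarrow> 'a) \<Rightarrow> (nat \<Rightarrow> 'a \<Rightarrow> 'a)
    \<Rightarrow> (nat \<Rightarrow> 'a \<Rightarrow> 'a) \<Rightarrow> 'k::comm_ring_1 \<Rightarrow> nat \<Rightarrow> ('a \<Rightarrow> 'k) set" where
  "dcycles Bas face tau omega s n =
     {x \<in> dchains Bas tau omega s n. n = 0 \<or> bdry face n x \<in> imt Bas tau (n - 1)}"

definition dbound :: "(nat \<Rightarrow> 'a set) \<Rightarrow> (nat \<Rightarrow> nat \<Rightarrow> 'a \<Rightarrow> 'a) \<Rightarrow> (nat \<Rightarrow> 'a \<Rightarrow> 'a)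
    \<Rightarrow> (nat \<Rightarrow> 'a \<Rightarrow> 'a) \<Rightarrow> 'k::comm_ring_1 \<Rightarrow> nat \<Rightarrow> ('a \<Rightarrow> 'k) set" where
  "dbound Bas face tau omega s n =
     {(\<lambda>y. bdry face (Suc n) x y + z y) | x z.
        x \<in> dchains Bas tau omega s (Suc n) \<and> z \<in> imt Bas tau n}"

text \<open>Isomorphism of k-vector spaces Z/B and Z'/B' (subquotients of function spaces):
  a k-linear map on Z into Z' inducing a bijection of the quotients.\<close>
definition subquot_iso :: "('a \<Rightarrow> 'k::field) set \<Rightarrow> ('a \<Rightarrow> 'k) set \<Rightarrow> ('b \<Rightarrow> 'k) set \<Rightarrow> ('b \<Rightarrow> 'k) set \<Rightarrow> bool" where
  "subquot_iso Z B Z' B' \<longleftrightarrow>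
     (\<exists>f. (\<forall>x\<in>Z. \<forall>y\<in>Z. \<forall>a. f (\<lambda>v. a * x v + y v) = (\<lambda>w. a * f x w + f y w))
        \<and> f ` Z \<subseteq> Z'
        \<and> (\<forall>z\<in>Z. f z \<in> B' \<longleftrightarrow> z \<in> B)
        \<and> (\<forall>z'\<in>Z'. \<exists>z\<in>Z. (\<lambda>w. f z w - z' w) \<in> B'))"

definition gprod :: "('g, 'b) monoid_scheme \<Rightarrow> 'g list \<Rightarrow> 'g" where
  "gprod G xs = foldr (\<lambda>g acc. g \<otimes>\<^bsub>G\<^esub> acc) xs \<one>\<^bsub>G\<^esub>"

section \<open>The dihedral module CC(kG;1,epsilon): degree n is (kG)^{\<otimes> n}, basis G^n\<close>

definition hopf_bas :: "('g, 'b) monoid_scheme \<Rightarrow> nat \<Rightarrow> 'g list set" where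
  "hopf_bas G n = {xs. length xs = n \<and> set xs \<subseteq> carrier G}"

definition hopf_face :: "('g, 'b) monoid_scheme \<Rightarrow> nat \<Rightarrow> nat \<Rightarrow> 'g list \<Rightarrow> 'g list" where
  "hopf_face G n i xs =
     (if i = 0 then tl xs
      else if i = n then butlast xs
      else take (i - 1) xs @ [xs ! (i - 1) \<otimes>\<^bsub>G\<^esub> xs ! i] @ drop (i + 1) xs)"

definition hopf_tau :: "('g, 'b) monoid_scheme \<Rightarrow> nat \<Rightarrow> 'g list \<Rightarrow> 'g list" where
  "hopf_tau G n xs = (if n = 0 then xs else inv\<^bsub>G\<^esub> (gprod G xs) # butlast xs)"

definition hopf_omega :: "('g, 'b) monoid_scheme \<Rightarrow> nat \<Rightarrow> 'g list \<Rightarrow> 'g list" where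
  "hopf_omega G n xs = rev (map (\<lambda>g. inv\<^bsub>G\<^esub> g) xs)"

section \<open>Dihedral submodule of the standard dihedral module of the *-algebra kG:
  degree n basis = (g_0,...,g_n) with g_0 ... g_n = 1\<close>

definition grp_bas :: "('g, 'b) monoid_scheme \<Rightarrow> nat \<Rightarrow> 'g list set" where
  "grp_bas G n = {xs. length xs = n + 1 \<and> set xs \<subseteq> carrier G \<and> gprod G xs = \<one>\<^bsub>G\<^esub>}"

definition grp_face :: "('g, 'b) monoid_scheme \<Rightarrow> nat \<Rightarrow> nat \<Rightarrow> 'g list \<Rightarrow> 'g list" where
  "grp_face G n i xs =
     (if i < n then take i xs @ [xs ! i \<otimes>\<^bsub>G\<^esub> xs ! (i + 1)] @ drop (i + 2) xs
      else (xs ! n \<otimes>\<^bsub>G\<^esub> xs ! 0) # take (n - 1) (drop 1 xs))"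

definition grp_tau :: "('g, 'b) monoid_scheme \<Rightarrow> nat \<Rightarrow> 'g list \<Rightarrow> 'g list" where
  "grp_tau G n xs = last xs # butlast xs"

definition grp_omega :: "('g, 'b) monoid_scheme \<Rightarrow> nat \<Rightarrow> 'g list \<Rightarrow> 'g list" where
  "grp_omega G n xs = inv\<^bsub>G\<^esub> (hd xs) # rev (map (\<lambda>g. inv\<^bsub>G\<^esub> g) (tl xs))"

section \<open>Dihedral homology groups as subquotients (s = 1 gives HC^+, s = -1 gives HC^-)\<close>

definition HC_hopf_Z :: "('g, 'b) monoid_scheme \<Rightarrow> 'k::comm_ring_1 \<Rightarrow> nat \<Rightarrow> ('g list \<Rightarrow> 'k) set" where
  "HC_hopf_Z G s n = dcycles (hopf_bas G) (hopf_face G) (hopf_tau G) (hopf_omega G) s n"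
definition HC_hopf_B :: "('g, 'b) monoid_scheme \<Rightarrow> 'k::comm_ring_1 \<Rightarrow> nat \<Rightarrow> ('g list \<Rightarrow> 'k) set" where
  "HC_hopf_B G s n = dbound (hopf_bas G) (hopf_face G) (hopf_tau G) (hopf_omega G) s n"
definition HC_grp_Z :: "('g, 'b) monoid_scheme \<Rightarrow> 'k::comm_ring_1 \<Rightarrow> nat \<Rightarrow> ('g list \<Rightarrow> 'k) set" where
  "HC_grp_Z G s n = dcycles (grp_bas G) (grp_face G) (grp_tau G) (grp_omega G) s n"
definition HC_grp_B :: "('g, 'b) monoid_scheme \<Rightarrow> 'k::comm_ring_1 \<Rightarrow> nat \<Rightarrow> ('g list \<Rightarrow> 'k) set" where
  "HC_grp_B G s n = dbound (grp_bas G) (grp_face G) (grp_tau G) (grp_omega G) s n"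

end

theory Submission
  imports Defs
begin

definition tr :: "'b set \<Rightarrow> ('b \<Rightarrow> 'a) \<Rightarrow> ('a \<Rightarrow> 'k::zero) \<Rightarrow> 'b \<Rightarrow> 'k" where
  "tr A' \<psi> c = (\<lambda>y. if y \<in> A' then c (\<psi> y) else 0)"

lemma chains_supp: "c \<in> chains A \<Longrightarrow> c x \<noteq> 0 \<Longrightarrow> x \<in> A"
  by (auto simp: chains_def)

lemma chains_supp0: "c \<in> chains A \<Longrightarrow> x \<notin> A \<Longrightarrow> c x = 0"
  by (auto simp: chains_def)

lemma lin_zero: "lin f (\<lambda>_. 0::'k::comm_ring_1) = (\<lambda>_. 0)"
  by (rule ext) (simp add: lin_def)

lemma lin_supp: "lin f c y \<noteq> 0 \<Longrightarrow> \<exists>x. c x \<noteq> 0 \<and> f x = y"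
proof (rule ccontr)
  assume a: "lin f c y \<noteq> 0" and b: "\<not> (\<exists>x. c x \<noteq> 0 \<and> f x = y)"
  then have "{x. c x \<noteq> 0 \<and> f x = y} = {}" by auto
  then have "lin f c y = sum c {}" by (simp only: lin_def)
  then show False using a by simp
qed

lemma chains_lin:
  assumes "c \<in> chains A" "\<And>x. x \<in> A \<Longrightarrow> f x \<in> B"
  shows "lin f c \<in> chains B"
proof -
  have sub: "{y. lin f c y \<noteq> 0} \<subseteq> f ` {x. c x \<noteq> 0}"
  proof (rule subsetI)
    fix y assume "y \<in> {y. lin f c y \<noteq> 0}"
    then have "lin f c y \<noteq> 0" by simp
    then obtain x where "c x \<noteq> 0" "f x = y" using lin_supp[of f c y] by blast
    then show "y \<in> f ` {x. c x \<noteq> 0}" by blast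
  qed
  have "finite {x. c x \<noteq> 0}" using assms(1) by (simp add: chains_def)
  then have "finite {y. lin f c y \<noteq> 0}" by (intro finite_subset[OF sub] finite_imageI)
  moreover have "f ` {x. c x \<noteq> 0} \<subseteq> B"
  proof (rule subsetI)
    fix y assume "y \<in> f ` {x. c x \<noteq> 0}"
    then obtain x where x: "c x \<noteq> 0" "y = f x" by blast
    have "x \<in> A" using chains_supp[OF assms(1) x(1)] .
    then show "y \<in> B" using x(2) assms(2) by simp
  qed
  ultimately show ?thesis unfolding chains_def using subset_trans[OF sub] by blast
qed

lemma chains_add:
  fixes c :: "'a \<Rightarrow> 'k::comm_ring_1"
  assumes "c \<in> chains A" "d \<in> chains A"
  shows "(\<lambda>y. c y + d y) \<in> chains A"
proof -
  have sub: "{y. c y + d y \<noteq> 0} \<subseteq> {y. c y \<noteq> 0} \<union> {y. d y \<noteq> 0}" by auto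
  have "finite ({y. c y \<noteq> 0} \<union> {y. d y \<noteq> 0})" using assms by (simp add: chains_def)
  then have "finite {y. c y + d y \<noteq> 0}" by (rule finite_subset[OF sub])
  moreover have "{y. c y \<noteq> 0} \<union> {y. d y \<noteq> 0} \<subseteq> A" using assms by (simp add: chains_def)
  ultimately show ?thesis unfolding chains_def using sub by blast
qed

lemma chains_diff:
  fixes c :: "'a \<Rightarrow> 'k::comm_ring_1"
  assumes "c \<in> chains A" "d \<in> chains A"
  shows "(\<lambda>y. c y - d y) \<in> chains A"
proof -
  have sub: "{y. c y - d y \<noteq> 0} \<subseteq> {y. c y \<noteq> 0} \<union> {y. d y \<noteq> 0}" by auto
  have "finite ({y. c y \<noteq> 0} \<union> {y. d y \<noteq> 0})" using assms by (simp add: chains_def)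
  then have "finite {y. c y - d y \<noteq> 0}" by (rule finite_subset[OF sub])
  moreover have "{y. c y \<noteq> 0} \<union> {y. d y \<noteq> 0} \<subseteq> A" using assms by (simp add: chains_def)
  ultimately show ?thesis unfolding chains_def using sub by blast
qed

lemma chains_scale:
  fixes c :: "'a \<Rightarrow> 'k::comm_ring_1"
  assumes "c \<in> chains A"
  shows "(\<lambda>y. a * c y) \<in> chains A"
proof -
  have sub: "{y. a * c y \<noteq> 0} \<subseteq> {y. c y \<noteq> 0}" by auto
  have "finite {y. c y \<noteq> 0}" using assms by (simp add: chains_def)
  then have "finite {y. a * c y \<noteq> 0}" by (rule finite_subset[OF sub])
  moreover have "{y. c y \<noteq> 0} \<subseteq> A" using assms by (simp add: chains_def)
  ultimately show ?thesis unfolding chains_def using sub by blast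
qed

lemma chains_zero: "(\<lambda>_. 0) \<in> chains A"
  by (simp add: chains_def)

lemma chains_sum:
  fixes c :: "'i \<Rightarrow> 'a \<Rightarrow> 'k::comm_ring_1"
  assumes "finite I" "\<And>i. i \<in> I \<Longrightarrow> c i \<in> chains A"
  shows "(\<lambda>y. \<Sum>i\<in>I. c i y) \<in> chains A"
  using assms
proof (induction I rule: finite_induct)
  case empty then show ?case by (simp add: chains_zero)
next
  case (insert a F)
  have e: "(\<lambda>y. \<Sum>i\<in>insert a F. c i y) = (\<lambda>y. c a y + (\<Sum>i\<in>F. c i y))"
    using insert.hyps by simp
  have "c a \<in> chains A" using insert.prems by simp
  moreover have "(\<lambda>y. \<Sum>i\<in>F. c i y) \<in> chains A" using insert.IH insert.prems by simp
  ultimately show ?case unfolding e by (rule chains_add)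
qed

lemma chains_bdry:
  fixes c :: "'a \<Rightarrow> 'k::comm_ring_1"
  assumes "c \<in> chains A" "\<And>i x. i \<le> n \<Longrightarrow> x \<in> A \<Longrightarrow> face n i x \<in> B"
  shows "bdry face n c \<in> chains B"
  unfolding bdry_def
proof (rule chains_sum)
  fix i assume "i \<in> {..n}"
  then have i: "i \<le> n" by simp
  have "lin (face n i) c \<in> chains B"
    by (rule chains_lin[OF assms(1)]) (rule assms(2)[OF i])
  then show "(\<lambda>y. (-1)^i * lin (face n i) c y) \<in> chains B" by (rule chains_scale)
qed simp

lemma lin_tr:
  fixes c :: "'a \<Rightarrow> 'k::comm_ring_1"
  assumes c: "c \<in> chains A" and bij: "bij_betw \<psi> A' A" and inj: "inj_on \<psi> B'"
    and f'B: "\<And>y. y \<in> A' \<Longrightarrow> f' y \<in> B'" and comm: "\<And>y. y \<in> A' \<Longrightarrow> \<psi> (f' y) = f (\<psi> y)"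
  shows "lin f' (tr A' \<psi> c) = tr B' \<psi> (lin f c)"
proof (rule ext)
  fix z
  show "lin f' (tr A' \<psi> c) z = tr B' \<psi> (lin f c) z"
  proof (cases "z \<in> B'")
    case False
    have "{y. tr A' \<psi> c y \<noteq> 0 \<and> f' y = z} = {}"
      using False f'B by (auto simp: tr_def split: if_splits)
    then have "lin f' (tr A' \<psi> c) z = sum (tr A' \<psi> c) {}" by (simp only: lin_def)
    then show ?thesis using False by (simp add: tr_def)
  next
    case True
    define S where "S = {y. tr A' \<psi> c y \<noteq> 0 \<and> f' y = z}"
    define R where "R = {x. c x \<noteq> 0 \<and> f x = \<psi> z}"
    have S: "S = {y \<in> A'. c (\<psi> y) \<noteq> 0 \<and> f' y = z}" unfolding S_def by (auto simp: tr_def split: if_splits)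
    have injS: "inj_on \<psi> S" using bij unfolding S bij_betw_def by (auto intro: inj_on_subset)
    have img: "\<psi> ` S = R"
    proof (rule equalityI)
      show "\<psi> ` S \<subseteq> R" using comm by (auto simp: S R_def)
      show "R \<subseteq> \<psi> ` S"
      proof (rule subsetI)
        fix x assume x: "x \<in> R"
        then have "x \<in> A" using c by (auto simp: chains_def R_def)
        then have "x \<in> \<psi> ` A'" using bij by (simp add: bij_betw_def)
        then obtain y where y: "y \<in> A'" "x = \<psi> y" by blast
        have "f' y \<in> B'" using f'B y by auto
        moreover have "\<psi> (f' y) = \<psi> z" using comm y x by (auto simp: R_def)
        ultimately have "f' y = z" using inj True by (auto dest: inj_onD)
        then show "x \<in> \<psi> ` S" using x y by (auto simp: S R_def)
      qed
    qed
    have "lin f' (tr A' \<psi> c) z = sum (tr A' \<psi> c) S" by (simp add: lin_def S_def)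
    also have "\<dots> = sum (\<lambda>y. c (\<psi> y)) S" by (rule sum.cong) (auto simp: S tr_def)
    also have "\<dots> = sum c (\<psi> ` S)" using sum.reindex[OF injS, of c] by simp
    also have "\<dots> = lin f c (\<psi> z)" using img by (simp add: lin_def R_def)
    finally show ?thesis using True by (simp add: tr_def)
  qed
qed

lemma tr_chains:
  assumes c: "c \<in> chains A" and bij: "bij_betw \<psi> A' A"
  shows "tr A' \<psi> c \<in> chains A'"
proof -
  define S where "S = {y. tr A' \<psi> c y \<noteq> 0}"
  have S: "S = {y \<in> A'. c (\<psi> y) \<noteq> 0}" unfolding S_def by (auto simp: tr_def split: if_splits)
  have "inj_on \<psi> S" using bij unfolding S bij_betw_def by (auto intro: inj_on_subset)
  moreover have "\<psi> ` S \<subseteq> {x. c x \<noteq> 0}" by (auto simp: S)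
  moreover have "finite {x. c x \<noteq> 0}" using c by (simp add: chains_def)
  ultimately have "finite S" by (meson finite_imageD finite_subset)
  then show ?thesis unfolding chains_def using S S_def by auto
qed

lemma tr_inj:
  assumes c: "c \<in> chains A" and d: "d \<in> chains A" and bij: "bij_betw \<psi> A' A"
    and eq: "tr A' \<psi> c = tr A' \<psi> d"
  shows "c = d"
proof (rule ext)
  fix x
  show "c x = d x"
  proof (cases "x \<in> A")
    case True
    then have "x \<in> \<psi> ` A'" using bij by (simp add: bij_betw_def)
    then obtain y where y: "y \<in> A'" "x = \<psi> y" by auto
    have "tr A' \<psi> c y = tr A' \<psi> d y" using eq by simp
    then show ?thesis using y by (simp add: tr_def)
  next
    case False
    have "c x = 0" by (rule chains_supp0[OF c False])
    moreover have "d x = 0" by (rule chains_supp0[OF d False])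
    ultimately show ?thesis by simp
  qed
qed

lemma tr_surj:
  fixes c' :: "'b \<Rightarrow> 'k::zero"
  assumes c': "c' \<in> chains A'" and bij: "bij_betw \<psi> A' A"
  shows "\<exists>c \<in> chains A. tr A' \<psi> c = c'"
proof -
  define c where "c = (\<lambda>x. if x \<in> A then c' (the_inv_into A' \<psi> x) else 0)"
  have inj: "inj_on \<psi> A'" and im: "\<psi> ` A' = A" using bij by (auto simp: bij_betw_def)
  have sub: "{x. c x \<noteq> 0} \<subseteq> \<psi> ` {y. c' y \<noteq> 0}"
  proof (rule subsetI)
    fix x assume "x \<in> {x. c x \<noteq> 0}"
    then have x: "x \<in> A" "c' (the_inv_into A' \<psi> x) \<noteq> 0" by (auto simp: c_def split: if_splits)
    have "\<psi> (the_inv_into A' \<psi> x) = x" by (rule f_the_inv_into_f[OF inj]) (simp add: im x(1))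
    then show "x \<in> \<psi> ` {y. c' y \<noteq> 0}" using x(2) by (intro image_eqI[where x="the_inv_into A' \<psi> x"]) auto
  qed
  have "finite {y. c' y \<noteq> 0}" using c' by (simp add: chains_def)
  then have "finite {x. c x \<noteq> 0}" by (intro finite_subset[OF sub] finite_imageI)
  moreover have "{x. c x \<noteq> 0} \<subseteq> A" by (auto simp: c_def split: if_splits)
  ultimately have cc: "c \<in> chains A" by (simp add: chains_def)
  have "tr A' \<psi> c = c'"
  proof (rule ext)
    fix y show "tr A' \<psi> c y = c' y"
    proof (cases "y \<in> A'")
      case True
      then have "\<psi> y \<in> A" unfolding im[symmetric] by (rule imageI)
      moreover have "the_inv_into A' \<psi> (\<psi> y) = y" by (rule the_inv_into_f_f[OF inj True])
      ultimately show ?thesis using True by (simp add: tr_def c_def)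
    next
      case False
      have "c' y = 0" by (rule chains_supp0[OF c' False])
      then show ?thesis using False by (simp add: tr_def)
    qed
  qed
  then show ?thesis by (rule bexI[OF _ cc])
qed

lemma zero_imt: "(\<lambda>_. 0::'k::comm_ring_1) \<in> imt Bas tau m"
  unfolding imt_def
  by (rule CollectI, rule exI[where x="\<lambda>_. 0"]) (simp add: cyct_def lin_zero chains_zero)

lemma zero_dchains: "(\<lambda>_. 0::'k::comm_ring_1) \<in> dchains Bas tau omega s m"
  unfolding dchains_def by (simp add: invl_def lin_zero chains_zero zero_imt)

lemma zero_dbound: "(\<lambda>_. 0::'k::comm_ring_1) \<in> dbound Bas face tau omega s n"
  unfolding dbound_def
  by (rule CollectI, rule exI[where x="\<lambda>_. 0"], rule exI[where x="\<lambda>_. 0"])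
     (simp add: bdry_def lin_zero zero_dchains zero_imt)

locale dtrans =
  fixes Bas :: "nat \<Rightarrow> 'a set" and face :: "nat \<Rightarrow> nat \<Rightarrow> 'a \<Rightarrow> 'a"
    and tau :: "nat \<Rightarrow> 'a \<Rightarrow> 'a" and omega :: "nat \<Rightarrow> 'a \<Rightarrow> 'a"
    and Bas' :: "nat \<Rightarrow> 'b set" and face' :: "nat \<Rightarrow> nat \<Rightarrow> 'b \<Rightarrow> 'b"
    and tau' :: "nat \<Rightarrow> 'b \<Rightarrow> 'b" and omega' :: "nat \<Rightarrow> 'b \<Rightarrow> 'b"
    and psi :: "'b \<Rightarrow> 'a"
  assumes bij: "\<And>n. bij_betw psi (Bas' n) (Bas n)"
    and fB: "\<And>n i x. 1 \<le> n \<Longrightarrow> i \<le> n \<Longrightarrow> x \<in> Bas n \<Longrightarrow> face n i x \<in> Bas (n - 1)"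
    and fB': "\<And>n i x. 1 \<le> n \<Longrightarrow> i \<le> n \<Longrightarrow> x \<in> Bas' n \<Longrightarrow> face' n i x \<in> Bas' (n - 1)"
    and tB: "\<And>n x. x \<in> Bas n \<Longrightarrow> tau n x \<in> Bas n"
    and tB': "\<And>n x. x \<in> Bas' n \<Longrightarrow> tau' n x \<in> Bas' n"
    and oB: "\<And>n x. x \<in> Bas n \<Longrightarrow> omega n x \<in> Bas n"
    and oB': "\<And>n x. x \<in> Bas' n \<Longrightarrow> omega' n x \<in> Bas' n"
    and fc: "\<And>n i y. 1 \<le> n \<Longrightarrow> i \<le> n \<Longrightarrow> y \<in> Bas' n \<Longrightarrow> psi (face' n i y) = face n i (psi y)"
    and tc: "\<And>n y. y \<in> Bas' n \<Longrightarrow> psi (tau' n y) = tau n (psi y)"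
    and oc: "\<And>n y. y \<in> Bas' n \<Longrightarrow> psi (omega' n y) = omega n (psi y)"
begin

abbreviation T :: "nat \<Rightarrow> ('a \<Rightarrow> 'k::comm_ring_1) \<Rightarrow> 'b \<Rightarrow> 'k" where
  "T n \<equiv> tr (Bas' n) psi"

lemma inj_n: "inj_on psi (Bas' n)"
  using bij[of n] by (simp add: bij_betw_def)

lemma T_chains: "c \<in> chains (Bas n) \<Longrightarrow> T n c \<in> chains (Bas' n)"
  by (rule tr_chains[OF _ bij])

lemma T_inj: "c \<in> chains (Bas n) \<Longrightarrow> d \<in> chains (Bas n) \<Longrightarrow> T n c = T n d \<Longrightarrow> c = d"
  by (rule tr_inj[OF _ _ bij])

lemma T_surj: "c' \<in> chains (Bas' n) \<Longrightarrow> \<exists>c \<in> chains (Bas n). T n c = c'"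
  by (rule tr_surj[OF _ bij])

lemma T_lin_face:
  assumes "1 \<le> n" "i \<le> n" "c \<in> chains (Bas n)"
  shows "lin (face' n i) (T n c) = T (n - 1) (lin (face n i) c)"
  by (rule lin_tr[OF assms(3) bij inj_n]) (use fB'[OF assms(1,2)] fc[OF assms(1,2)] in auto)

lemma T_lin_tau:
  assumes "c \<in> chains (Bas n)"
  shows "lin (tau' n) (T n c) = T n (lin (tau n) c)"
  by (rule lin_tr[OF assms bij inj_n]) (auto intro: tB' tc)

lemma T_lin_omega:
  assumes "c \<in> chains (Bas n)"
  shows "lin (omega' n) (T n c) = T n (lin (omega n) c)"
  by (rule lin_tr[OF assms bij inj_n]) (auto intro: oB' oc)

lemma T_bdry:
  fixes c :: "'a \<Rightarrow> 'k::comm_ring_1"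
  assumes "1 \<le> n" "c \<in> chains (Bas n)"
  shows "bdry face' n (T n c) = T (n - 1) (bdry face n c)"
proof (rule ext)
  fix y
  have "bdry face' n (T n c) y = (\<Sum>i\<le>n. (-1)^i * T (n - 1) (lin (face n i) c) y)"
    unfolding bdry_def
  proof (rule sum.cong)
    fix i assume "i \<in> {..n}"
    then have "i \<le> n" by simp
    then show "(-1)^i * lin (face' n i) (T n c) y = (-1)^i * T (n - 1) (lin (face n i) c) y"
      using T_lin_face[OF assms(1) _ assms(2), of i] by simp
  qed simp
  also have "\<dots> = T (n - 1) (bdry face n c) y"
    by (simp add: tr_def bdry_def)
  finally show "bdry face' n (T n c) y = T (n - 1) (bdry face n c) y" .
qed

lemma T_cyct:
  fixes c :: "'a \<Rightarrow> 'k::comm_ring_1"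
  assumes "c \<in> chains (Bas n)"
  shows "cyct tau' n (T n c) = T n (cyct tau n c)"
  unfolding cyct_def T_lin_tau[OF assms] by (rule ext) (simp add: tr_def)

lemma T_invl:
  fixes c :: "'a \<Rightarrow> 'k::comm_ring_1"
  assumes "c \<in> chains (Bas n)"
  shows "invl omega' n (T n c) = T n (invl omega n c)"
  unfolding invl_def T_lin_omega[OF assms] by (rule ext) (simp add: tr_def)

lemma chains_cyct:
  fixes c :: "'a \<Rightarrow> 'k::comm_ring_1"
  assumes "c \<in> chains (Bas n)"
  shows "cyct tau n c \<in> chains (Bas n)"
  unfolding cyct_def by (rule chains_scale, rule chains_lin[OF assms], rule tB)

lemma chains_invl:
  fixes c :: "'a \<Rightarrow> 'k::comm_ring_1"
  assumes "c \<in> chains (Bas n)"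
  shows "invl omega n c \<in> chains (Bas n)"
  unfolding invl_def by (rule chains_scale, rule chains_lin[OF assms], rule oB)

lemma chains_bdry_n:
  fixes c :: "'a \<Rightarrow> 'k::comm_ring_1"
  assumes "1 \<le> n" "c \<in> chains (Bas n)"
  shows "bdry face n c \<in> chains (Bas (n - 1))"
  by (rule chains_bdry[OF assms(2)]) (rule fB[OF assms(1)])

lemma imt_chains: "imt Bas tau n \<subseteq> (chains (Bas n) :: ('a \<Rightarrow> 'k::comm_ring_1) set)"
proof (rule subsetI)
  fix x :: "'a \<Rightarrow> 'k" assume "x \<in> imt Bas tau n"
  then obtain c where c: "c \<in> chains (Bas n)" "x = (\<lambda>y. c y - cyct tau n c y)"
    unfolding imt_def by auto
  show "x \<in> chains (Bas n)" unfolding c(2) by (rule chains_diff[OF c(1) chains_cyct[OF c(1)]])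
qed

lemma T_diff: "T n (\<lambda>y. c y - d y) = (\<lambda>y. T n c y - T n d y)"
  by (rule ext) (simp add: tr_def)

lemma T_add: "T n (\<lambda>y. c y + d y) = (\<lambda>y. T n c y + T n d y)"
  by (rule ext) (simp add: tr_def)

lemma T_smul: "T n (\<lambda>y. a * c y) = (\<lambda>y. a * T n c y)"
  by (rule ext) (simp add: tr_def)

lemma T_imt_elem:
  fixes c :: "'a \<Rightarrow> 'k::comm_ring_1"
  assumes "c \<in> chains (Bas n)"
  shows "T n (\<lambda>y. c y - cyct tau n c y) = (\<lambda>y. T n c y - cyct tau' n (T n c) y)"
  unfolding T_diff T_cyct[OF assms] ..

lemma T_imt_img: "T n ` imt Bas tau n = (imt Bas' tau' n :: ('b \<Rightarrow> 'k::comm_ring_1) set)"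
proof (rule equalityI)
  show "T n ` imt Bas tau n \<subseteq> (imt Bas' tau' n :: ('b \<Rightarrow> 'k) set)"
  proof (rule subsetI)
    fix x' :: "'b \<Rightarrow> 'k" assume "x' \<in> T n ` imt Bas tau n"
    then obtain c where c: "c \<in> chains (Bas n)" "x' = T n (\<lambda>y. c y - cyct tau n c y)"
      unfolding imt_def by auto
    have "x' = (\<lambda>y. T n c y - cyct tau' n (T n c) y)" using c T_imt_elem by simp
    then show "x' \<in> imt Bas' tau' n" unfolding imt_def using T_chains[OF c(1)] by auto
  qed
  show "(imt Bas' tau' n :: ('b \<Rightarrow> 'k) set) \<subseteq> T n ` imt Bas tau n"
  proof (rule subsetI)
    fix x' :: "'b \<Rightarrow> 'k" assume "x' \<in> imt Bas' tau' n"
    then obtain c' where c': "c' \<in> chains (Bas' n)" "x' = (\<lambda>y. c' y - cyct tau' n c' y)"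
      unfolding imt_def by auto
    obtain c where c: "c \<in> chains (Bas n)" "T n c = c'" using T_surj[OF c'(1)] by auto
    have "x' = (\<lambda>y. T n c y - cyct tau' n (T n c) y)" using c'(2) c(2) by simp
    also have "\<dots> = T n (\<lambda>y. c y - cyct tau n c y)" using T_imt_elem[OF c(1)] by simp
    finally have "x' = T n (\<lambda>y. c y - cyct tau n c y)" .
    moreover have "(\<lambda>y. c y - cyct tau n c y) \<in> imt Bas tau n" unfolding imt_def using c(1) by auto
    ultimately show "x' \<in> T n ` imt Bas tau n" by (rule image_eqI)
  qed
qed

lemma T_imt_iff:
  fixes x :: "'a \<Rightarrow> 'k::comm_ring_1"
  assumes x: "x \<in> chains (Bas n)"
  shows "T n x \<in> imt Bas' tau' n \<longleftrightarrow> x \<in> imt Bas tau n"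
proof
  assume "T n x \<in> imt Bas' tau' n"
  then have "T n x \<in> T n ` imt Bas tau n" by (simp add: T_imt_img)
  then obtain w where w: "w \<in> imt Bas tau n" "T n x = T n w" by auto
  have "w \<in> chains (Bas n)" using w(1) imt_chains by auto
  then have "x = w" using T_inj[OF x _ w(2)] by simp
  then show "x \<in> imt Bas tau n" using w(1) by simp
next
  assume "x \<in> imt Bas tau n"
  then have "T n x \<in> T n ` imt Bas tau n" by (rule imageI)
  then show "T n x \<in> imt Bas' tau' n" by (simp add: T_imt_img)
qed

lemma dchains_chains: "dchains Bas tau omega s n \<subseteq> chains (Bas n)"
  unfolding dchains_def by auto

lemma dchains_chains': "dchains Bas' tau' omega' s n \<subseteq> chains (Bas' n)"
  unfolding dchains_def by auto

lemma T_dchains_iff: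
  fixes x :: "'a \<Rightarrow> 'k::comm_ring_1"
  assumes x: "x \<in> chains (Bas n)"
  shows "T n x \<in> dchains Bas' tau' omega' s n \<longleftrightarrow> x \<in> dchains Bas tau omega s n"
proof -
  have e: "(\<lambda>y. T n x y - s * invl omega' n (T n x) y) = T n (\<lambda>y. x y - s * invl omega n x y)"
    unfolding T_diff T_smul T_invl[OF x] ..
  have ch: "(\<lambda>y. x y - s * invl omega n x y) \<in> chains (Bas n)"
    by (rule chains_diff[OF x chains_scale[OF chains_invl[OF x]]])
  show ?thesis unfolding dchains_def mem_Collect_eq e T_imt_iff[OF ch]
    using x T_chains[OF x] by simp
qed

lemma T_dcycles_iff:
  fixes x :: "'a \<Rightarrow> 'k::comm_ring_1"
  assumes x: "x \<in> chains (Bas n)"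
  shows "T n x \<in> dcycles Bas' face' tau' omega' s n \<longleftrightarrow> x \<in> dcycles Bas face tau omega s n"
proof (cases "n = 0")
  case True
  then show ?thesis unfolding dcycles_def using T_dchains_iff[OF x] by simp
next
  case False
  then have n: "1 \<le> n" by simp
  have "bdry face' n (T n x) \<in> imt Bas' tau' (n - 1) \<longleftrightarrow> bdry face n x \<in> imt Bas tau (n - 1)"
    unfolding T_bdry[OF n x] by (rule T_imt_iff[OF chains_bdry_n[OF n x]])
  then show ?thesis unfolding dcycles_def using T_dchains_iff[OF x] False by simp
qed

lemma dcycles_chains: "dcycles Bas face tau omega s n \<subseteq> chains (Bas n)"
  unfolding dcycles_def dchains_def by auto

lemma dcycles_chains': "dcycles Bas' face' tau' omega' s n \<subseteq> chains (Bas' n)"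
  unfolding dcycles_def dchains_def by auto

lemma T_dbound_elem:
  fixes x :: "'a \<Rightarrow> 'k::comm_ring_1"
  assumes x: "x \<in> chains (Bas (Suc n))"
  shows "T n (\<lambda>y. bdry face (Suc n) x y + w y) = (\<lambda>y. bdry face' (Suc n) (T (Suc n) x) y + T n w y)"
  using T_bdry[of "Suc n" x] x unfolding T_add by simp

lemma dbound_chains: "dbound Bas face tau omega s n \<subseteq> (chains (Bas n) :: ('a \<Rightarrow> 'k::comm_ring_1) set)"
proof (rule subsetI)
  fix z :: "'a \<Rightarrow> 'k" assume "z \<in> dbound Bas face tau omega s n"
  then obtain x w where xw: "z = (\<lambda>y. bdry face (Suc n) x y + w y)"
    "x \<in> dchains Bas tau omega s (Suc n)" "w \<in> imt Bas tau n"
    unfolding dbound_def by auto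
  have x: "x \<in> chains (Bas (Suc n))" using xw(2) dchains_chains by auto
  have "bdry face (Suc n) x \<in> chains (Bas n)" using chains_bdry_n[of "Suc n" x] x by simp
  moreover have "w \<in> chains (Bas n)" using xw(3) imt_chains by auto
  ultimately show "z \<in> chains (Bas n)" unfolding xw(1) by (rule chains_add)
qed

lemma T_dbound_iff:
  fixes z :: "'a \<Rightarrow> 'k::comm_ring_1"
  assumes z: "z \<in> chains (Bas n)"
  shows "T n z \<in> dbound Bas' face' tau' omega' s n \<longleftrightarrow> z \<in> dbound Bas face tau omega s n"
proof
  assume "z \<in> dbound Bas face tau omega s n"
  then obtain x w where xw: "z = (\<lambda>y. bdry face (Suc n) x y + w y)"
    "x \<in> dchains Bas tau omega s (Suc n)" "w \<in> imt Bas tau n"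
    unfolding dbound_def by auto
  have x: "x \<in> chains (Bas (Suc n))" using xw(2) dchains_chains by auto
  have w: "w \<in> chains (Bas n)" using xw(3) imt_chains by auto
  have "T n z = (\<lambda>y. bdry face' (Suc n) (T (Suc n) x) y + T n w y)"
    unfolding xw(1) by (rule T_dbound_elem[OF x])
  moreover have "T (Suc n) x \<in> dchains Bas' tau' omega' s (Suc n)" using T_dchains_iff[OF x] xw(2) by simp
  moreover have "T n w \<in> imt Bas' tau' n" using T_imt_iff[OF w] xw(3) by simp
  ultimately show "T n z \<in> dbound Bas' face' tau' omega' s n" unfolding dbound_def by auto
next
  assume "T n z \<in> dbound Bas' face' tau' omega' s n"
  then obtain x' w' where xw: "T n z = (\<lambda>y. bdry face' (Suc n) x' y + w' y)"
    "x' \<in> dchains Bas' tau' omega' s (Suc n)" "w' \<in> imt Bas' tau' n"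
    unfolding dbound_def by auto
  have "x' \<in> chains (Bas' (Suc n))" using xw(2) dchains_chains' by auto
  then obtain x where x: "x \<in> chains (Bas (Suc n))" "T (Suc n) x = x'" using T_surj by blast
  have xd: "x \<in> dchains Bas tau omega s (Suc n)" using T_dchains_iff[OF x(1)] xw(2) x(2) by simp
  have "w' \<in> T n ` imt Bas tau n" using xw(3) unfolding T_imt_img .
  then obtain w where w: "w \<in> imt Bas tau n" "T n w = w'" by auto
  have wc: "w \<in> chains (Bas n)" using w(1) imt_chains by auto
  define z0 where "z0 = (\<lambda>y. bdry face (Suc n) x y + w y)"
  have z0d: "z0 \<in> dbound Bas face tau omega s n" unfolding dbound_def z0_def using xd w(1) by auto
  have "T n z0 = T n z" unfolding z0_def T_dbound_elem[OF x(1)] x(2) w(2) xw(1) ..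
  moreover have "z0 \<in> chains (Bas n)" using z0d dbound_chains by auto
  ultimately have "z0 = z" using T_inj[OF _ z] by simp
  then show "z \<in> dbound Bas face tau omega s n" using z0d by simp
qed

lemma T_iso:
  fixes s :: "'k::field"
  shows "subquot_iso (dcycles Bas face tau omega s n) (dbound Bas face tau omega s n)
           (dcycles Bas' face' tau' omega' s n) (dbound Bas' face' tau' omega' s n)"
  unfolding subquot_iso_def
proof (intro exI[where x="T n"] conjI ballI allI)
  fix x y :: "'a \<Rightarrow> 'k" and a :: 'k
  show "T n (\<lambda>v. a * x v + y v) = (\<lambda>w. a * T n x w + T n y w)"
    by (rule ext) (simp add: tr_def)
next
  show "T n ` dcycles Bas face tau omega s n \<subseteq> dcycles Bas' face' tau' omega' s n"
  proof (rule subsetI)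
    fix z' :: "'b \<Rightarrow> 'k" assume "z' \<in> T n ` dcycles Bas face tau omega s n"
    then obtain z where z: "z \<in> dcycles Bas face tau omega s n" "z' = T n z" by auto
    have "z \<in> chains (Bas n)" using z(1) dcycles_chains by auto
    then show "z' \<in> dcycles Bas' face' tau' omega' s n" using T_dcycles_iff[of z n s] z by simp
  qed
next
  fix z :: "'a \<Rightarrow> 'k" assume "z \<in> dcycles Bas face tau omega s n"
  then have "z \<in> chains (Bas n)" using dcycles_chains by auto
  then show "T n z \<in> dbound Bas' face' tau' omega' s n \<longleftrightarrow> z \<in> dbound Bas face tau omega s n"
    by (rule T_dbound_iff)
next
  fix z' :: "'b \<Rightarrow> 'k" assume z': "z' \<in> dcycles Bas' face' tau' omega' s n"
  then have "z' \<in> chains (Bas' n)" using dcycles_chains' by auto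
  then obtain z where z: "z \<in> chains (Bas n)" "T n z = z'" using T_surj by blast
  have zc: "z \<in> dcycles Bas face tau omega s n" using T_dcycles_iff[OF z(1)] z(2) z' by simp
  have "(\<lambda>w. T n z w - z' w) = (\<lambda>_. 0)" using z(2) by simp
  then have "(\<lambda>w. T n z w - z' w) \<in> dbound Bas' face' tau' omega' s n" using zero_dbound by simp
  then show "\<exists>z\<in>dcycles Bas face tau omega s n. (\<lambda>w. T n z w - z' w) \<in> dbound Bas' face' tau' omega' s n"
    using zc by blast
qed

end

context group
begin

lemma gprod_Nil[simp]: "gprod G [] = \<one>" by (simp add: gprod_def)
lemma gprod_Cons[simp]: "gprod G (x # xs) = x \<otimes> gprod G xs" by (simp add: gprod_def)

lemma gprod_closed[simp]: "set xs \<subseteq> carrier G \<Longrightarrow> gprod G xs \<in> carrier G"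
  by (induction xs) auto

lemma gprod_append: "set xs \<subseteq> carrier G \<Longrightarrow> set ys \<subseteq> carrier G \<Longrightarrow>
    gprod G (xs @ ys) = gprod G xs \<otimes> gprod G ys"
  by (induction xs) (auto simp: m_assoc)

lemma gprod_rev_inv: "set xs \<subseteq> carrier G \<Longrightarrow> gprod G (rev (map (\<lambda>g. inv g) xs)) = inv (gprod G xs)"
proof (induction xs)
  case Nil then show ?case by simp
next
  case (Cons x xs)
  then have x: "x \<in> carrier G" and xs: "set xs \<subseteq> carrier G" by auto
  have "gprod G (rev (map (\<lambda>g. inv g) (x # xs))) = gprod G (rev (map (\<lambda>g. inv g) xs)) \<otimes> gprod G [inv x]"
  proof -
    have "rev (map (\<lambda>g. inv g) (x # xs)) = rev (map (\<lambda>g. inv g) xs) @ [inv x]" by simp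
    moreover have "set (rev (map (\<lambda>g. inv g) xs)) \<subseteq> carrier G" using xs by auto
    moreover have "set [inv x] \<subseteq> carrier G" using x by simp
    ultimately show ?thesis using gprod_append by metis
  qed
  also have "\<dots> = inv (gprod G xs) \<otimes> inv x" using Cons x xs by simp
  also have "\<dots> = inv (x \<otimes> gprod G xs)" using x xs by (simp add: inv_mult_group)
  finally show ?case by simp
qed

lemma gprod_merge:
  "Suc i < length ys \<Longrightarrow> set ys \<subseteq> carrier G \<Longrightarrow>
   gprod G (take i ys @ [ys ! i \<otimes> ys ! (i + 1)] @ drop (i + 2) ys) = gprod G ys"
proof (induction i arbitrary: ys)
  case 0
  then obtain a b r where ys: "ys = a # b # r"
    by (metis Suc_length_conv less_imp_Suc_add add_Suc)
  then show ?case using 0 by (simp add: m_assoc)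
next
  case (Suc j)
  then obtain a r where ys: "ys = a # r" by (cases ys) auto
  then show ?case using Suc.IH[of r] Suc.prems by simp
qed

lemma rot_one: "set xs \<subseteq> carrier G \<Longrightarrow> b \<in> carrier G \<Longrightarrow> gprod G (xs @ [b]) = \<one> \<Longrightarrow>
    b \<otimes> gprod G xs = \<one>"
proof -
  assume xs: "set xs \<subseteq> carrier G" and b: "b \<in> carrier G" and e: "gprod G (xs @ [b]) = \<one>"
  have "gprod G xs \<otimes> b = \<one>" using e xs b by (simp add: gprod_append)
  then have "inv b = gprod G xs" using xs b by (simp add: inv_equality)
  then show ?thesis using b by (metis r_inv)
qed

lemma head_inv: "a \<in> carrier G \<Longrightarrow> set t \<subseteq> carrier G \<Longrightarrow> a \<otimes> gprod G t = \<one> \<Longrightarrow> a = inv (gprod G t)"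
  by (simp add: inv_equality)

end

context group
begin

lemma grp_bas_cons:
  assumes "ys \<in> grp_bas G n"
  obtains a t where "ys = a # t" "length t = n" "a \<in> carrier G" "set t \<subseteq> carrier G"
    "a = inv (gprod G t)"
proof -
  obtain a t where ys: "ys = a # t" using assms by (cases ys) (auto simp: grp_bas_def)
  have l: "length t = n" and a: "a \<in> carrier G" and t: "set t \<subseteq> carrier G"
    and p: "a \<otimes> gprod G t = \<one>" using assms ys by (auto simp: grp_bas_def gprod_def)
  have "a = inv (gprod G t)" using head_inv[OF a t p] .
  then show ?thesis using that ys l a t by blast
qed

lemma bij_tl: "bij_betw tl (grp_bas G n) (hopf_bas G n)"
  unfolding bij_betw_def
proof (intro conjI)
  show "inj_on tl (grp_bas G n)"
  proof (rule inj_onI)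
    fix ys zs assume ys: "ys \<in> grp_bas G n" and zs: "zs \<in> grp_bas G n" and e: "tl ys = tl zs"
    obtain a t where A: "ys = a # t" "a = inv (gprod G t)" using grp_bas_cons[OF ys] by metis
    obtain b r where B: "zs = b # r" "b = inv (gprod G r)" using grp_bas_cons[OF zs] by metis
    show "ys = zs" using A B e by simp
  qed
  show "tl ` grp_bas G n = hopf_bas G n"
  proof (rule equalityI)
    show "tl ` grp_bas G n \<subseteq> hopf_bas G n"
    proof (rule subsetI)
      fix x assume "x \<in> tl ` grp_bas G n"
      then obtain ys where ys: "ys \<in> grp_bas G n" "x = tl ys" by auto
      obtain a t where "ys = a # t" "length t = n" "set t \<subseteq> carrier G"
        using grp_bas_cons[OF ys(1)] by metis
      then show "x \<in> hopf_bas G n" using ys(2) by (simp add: hopf_bas_def)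
    qed
    show "hopf_bas G n \<subseteq> tl ` grp_bas G n"
    proof (rule subsetI)
      fix xs assume xs: "xs \<in> hopf_bas G n"
      then have l: "length xs = n" and c: "set xs \<subseteq> carrier G" by (auto simp: hopf_bas_def)
      have "inv (gprod G xs) # xs \<in> grp_bas G n"
        using l c by (simp add: grp_bas_def gprod_def[symmetric] l_inv)
      then show "xs \<in> tl ` grp_bas G n" by (rule image_eqI[rotated]) simp
    qed
  qed
qed

lemma hopf_face_bas:
  assumes "1 \<le> n" "i \<le> n" "xs \<in> hopf_bas G n"
  shows "hopf_face G n i xs \<in> hopf_bas G (n - 1)"
proof -
  have l: "length xs = n" and c: "set xs \<subseteq> carrier G" using assms(3) by (auto simp: hopf_bas_def)
  consider "i = 0" | "i = n" "i \<noteq> 0" | "0 < i" "i < n" using assms by linarith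
  then show ?thesis
  proof cases
    case 1
    have "set (tl xs) \<subseteq> set xs" by (cases xs) auto
    then show ?thesis using 1 l c by (auto simp: hopf_face_def hopf_bas_def)
  next
    case 2
    have "set (butlast xs) \<subseteq> set xs" by (auto dest: in_set_butlastD)
    then show ?thesis using 2 l c by (auto simp: hopf_face_def hopf_bas_def)
  next
    case 3
    have m: "xs ! (i - 1) \<otimes> xs ! i \<in> carrier G" using 3 l c by (auto intro!: m_closed nth_mem)
    have "set (take (i - 1) xs) \<subseteq> carrier G" using c set_take_subset by fastforce
    moreover have "set (drop (i + 1) xs) \<subseteq> carrier G" using c set_drop_subset by fastforce
    ultimately show ?thesis using 3 l m by (auto simp: hopf_face_def hopf_bas_def)
  qed
qed

lemma grp_face_bas:
  assumes "1 \<le> n" "i \<le> n" "ys \<in> grp_bas G n"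
  shows "grp_face G n i ys \<in> grp_bas G (n - 1)"
proof -
  have l: "length ys = n + 1" and c: "set ys \<subseteq> carrier G" and p: "gprod G ys = \<one>"
    using assms(3) by (auto simp: grp_bas_def)
  show ?thesis
  proof (cases "i < n")
    case True
    have m: "ys ! i \<otimes> ys ! (i + 1) \<in> carrier G" using True l c by (auto intro!: m_closed nth_mem)
    have "set (take i ys) \<subseteq> carrier G" using c set_take_subset by fastforce
    moreover have "set (drop (i + 2) ys) \<subseteq> carrier G" using c set_drop_subset by fastforce
    moreover have "gprod G (take i ys @ [ys ! i \<otimes> ys ! (i + 1)] @ drop (i + 2) ys) = \<one>"
      using gprod_merge[of i ys] True l c p by simp
    ultimately show ?thesis using True l m by (auto simp: grp_face_def grp_bas_def)
  next
    case False
    then have i: "i = n" using assms by simp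
    obtain a t where ys: "ys = a # t" using l by (cases ys) auto
    have "t \<noteq> []" using ys l assms(1) by auto
    then obtain mid b where t: "t = mid @ [b]" by (cases t rule: rev_cases) auto
    have n: "n = Suc (length mid)" using l ys t by simp
    have a: "a \<in> carrier G" and b: "b \<in> carrier G" and cm: "set mid \<subseteq> carrier G"
      using c ys t by auto
    have "gprod G ((a # mid) @ [b]) = \<one>" using p ys t by simp
    then have "b \<otimes> gprod G (a # mid) = \<one>" using rot_one[of "a # mid" b] a b cm by simp
    then have pr: "gprod G ((b \<otimes> a) # mid) = \<one>" using a b cm by (simp add: m_assoc)
    have "grp_face G n i ys = (b \<otimes> a) # mid"
      using i ys t n by (simp add: grp_face_def nth_append)
    then show ?thesis using pr a b cm n by (simp add: grp_bas_def)
  qed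
qed

lemma hopf_tau_bas: "xs \<in> hopf_bas G n \<Longrightarrow> hopf_tau G n xs \<in> hopf_bas G n"
  by (auto simp: hopf_tau_def hopf_bas_def dest: in_set_butlastD)

lemma grp_tau_bas:
  assumes "ys \<in> grp_bas G n"
  shows "grp_tau G n ys \<in> grp_bas G n"
proof -
  have l: "length ys = n + 1" and c: "set ys \<subseteq> carrier G" and p: "gprod G ys = \<one>"
    using assms by (auto simp: grp_bas_def)
  have "ys \<noteq> []" using l by auto
  then obtain r b where ys: "ys = r @ [b]" by (cases ys rule: rev_cases) auto
  have b: "b \<in> carrier G" and r: "set r \<subseteq> carrier G" using c ys by auto
  have "b \<otimes> gprod G r = \<one>" using rot_one[OF r b] p ys by simp
  then show ?thesis using ys l b r by (simp add: grp_tau_def grp_bas_def)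
qed

lemma hopf_omega_bas: "xs \<in> hopf_bas G n \<Longrightarrow> hopf_omega G n xs \<in> hopf_bas G n"
  by (auto simp: hopf_omega_def hopf_bas_def)

lemma grp_omega_bas:
  assumes "ys \<in> grp_bas G n"
  shows "grp_omega G n ys \<in> grp_bas G n"
proof -
  obtain a t where A: "ys = a # t" "length t = n" "a \<in> carrier G" "set t \<subseteq> carrier G"
    "a = inv (gprod G t)" using grp_bas_cons[OF assms] by metis
  have "gprod G (grp_omega G n ys) = inv a \<otimes> inv (gprod G t)"
    using A by (simp add: grp_omega_def gprod_rev_inv)
  also have "\<dots> = \<one>" using A by simp
  finally show ?thesis using A by (auto simp: grp_omega_def grp_bas_def)
qed

lemma face_comm:
  assumes "1 \<le> n" "i \<le> n" "ys \<in> grp_bas G n"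
  shows "tl (grp_face G n i ys) = hopf_face G n i (tl ys)"
proof -
  obtain a t where A: "ys = a # t" "length t = n" using grp_bas_cons[OF assms(3)] by metis
  show ?thesis
  proof (cases "i = n")
    case True
    then show ?thesis using A assms(1) by (simp add: grp_face_def hopf_face_def butlast_conv_take)
  next
    case False
    then have lt: "i < n" using assms(2) by simp
    show ?thesis
    proof (cases i)
      case 0
      then show ?thesis using A lt by (cases t) (simp_all add: grp_face_def hopf_face_def)
    next
      case (Suc j)
      then show ?thesis using A lt by (simp add: grp_face_def hopf_face_def)
    qed
  qed
qed

lemma tau_comm:
  assumes "ys \<in> grp_bas G n"
  shows "tl (grp_tau G n ys) = hopf_tau G n (tl ys)"
proof -
  obtain a t where A: "ys = a # t" "length t = n" "a = inv (gprod G t)"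
    using grp_bas_cons[OF assms] by metis
  show ?thesis
  proof (cases "n = 0")
    case True then show ?thesis using A by (simp add: grp_tau_def hopf_tau_def)
  next
    case False
    then have "t \<noteq> []" using A by auto
    then show ?thesis using A False by (simp add: grp_tau_def hopf_tau_def)
  qed
qed

lemma omega_comm: "tl (grp_omega G n ys) = hopf_omega G n (tl ys)"
  by (simp add: grp_omega_def hopf_omega_def)

lemma dtrans_inst:
  "dtrans (hopf_bas G) (hopf_face G) (hopf_tau G) (hopf_omega G)
     (grp_bas G) (grp_face G) (grp_tau G) (grp_omega G) tl"
  apply unfold_locales
  apply (rule bij_tl)
  subgoal for n i x using hopf_face_bas[of n i x] by simp
  subgoal for n i x using grp_face_bas[of n i x] by simp
  apply (erule hopf_tau_bas)
  apply (erule grp_tau_bas)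
  apply (erule hopf_omega_bas)
  apply (erule grp_omega_bas)
  apply (rule face_comm; simp)
  apply (erule tau_comm)
  apply (rule omega_comm)
  done

end

theorem proposition5p6:
  fixes G :: "('g, 'b) monoid_scheme" and s :: "'k::field_char_0" and n :: nat
  assumes "group G" and "s = 1 \<or> s = -1"
  shows "subquot_iso (HC_hopf_Z G s n) (HC_hopf_B G s n) (HC_grp_Z G s n) (HC_grp_B G s n)"
proof -
  interpret dtrans "hopf_bas G" "hopf_face G" "hopf_tau G" "hopf_omega G"
     "grp_bas G" "grp_face G" "grp_tau G" "grp_omega G" tl
    using group.dtrans_inst[OF assms(1)] .
  show ?thesis unfolding HC_hopf_Z_def HC_hopf_B_def HC_grp_Z_def HC_grp_B_def
    by (rule T_iso)
qed

end
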